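(* Let $K$ be a field, $L$ a right $K$-vector space of dimension $\kappa>1$, and $R$ the endomorphism algebra of $L$. If $\kappa$ is finite, then $R$ has a multiplicative basis but no strong multiplicative basis. If $\kappa$ is infinite, then $R$ has no bounded basis.
   Context: Let $B$ be a $K$-linear basis of a $K$-algebra $R$. For $r\in R$ write $r=\sum_{b\in B} b k_b$, $\mathrm{supp}(r)=\{b\mid k_b\neq 0\}$, $\mathrm{cs}(r)=|\mathrm{supp}(r)|$. $B$ is $k$-bounded ($1\le k<\omega$) if $\mathrm{cs}(bb')\le k$ for all $b,b'\in B$, and bounded if $k$-bounded for some $k$. $B$ is multiplicative if for all $b,b'\in B$ either $bb'=0$ or $bb'\in B$; it is strong multiplicative if $bb'\in B$ for all $b,b'\in B$. *)

theory Defs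
  imports Complex_Main "HOL-Library.Function_Algebras"
begin

text \<open>R = End_K(L) is the set of K-linear maps L \<rightarrow> L, sitting inside the
  K-vector space of all functions L \<Rightarrow> L (pointwise operations),
  with multiplication given by composition.\<close>

definition End_alg :: "('k::field \<Rightarrow> 'v::ab_group_add \<Rightarrow> 'v) \<Rightarrow> ('v \<Rightarrow> 'v) set" where
  "End_alg scale = {f. Vector_Spaces.linear scale scale f}"

definition fscale :: "('k::field \<Rightarrow> 'v::ab_group_add \<Rightarrow> 'v) \<Rightarrow> 'k \<Rightarrow> ('v \<Rightarrow> 'v) \<Rightarrow> ('v \<Rightarrow> 'v)" where
  "fscale scale c f = (\<lambda>x. scale c (f x))"

definition is_basis_End :: "('k::field \<Rightarrow> 'v::ab_group_add \<Rightarrow> 'v) \<Rightarrow> ('v \<Rightarrow> 'v) set \<Rightarrow> bool" where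
  "is_basis_End scale B \<longleftrightarrow> B \<subseteq> End_alg scale \<and>
     \<not> module.dependent (fscale scale) B \<and> module.span (fscale scale) B = End_alg scale"

definition supp_B :: "('k::field \<Rightarrow> 'v::ab_group_add \<Rightarrow> 'v) \<Rightarrow> ('v \<Rightarrow> 'v) set \<Rightarrow> ('v \<Rightarrow> 'v) \<Rightarrow> ('v \<Rightarrow> 'v) set" where
  "supp_B scale B r = {b \<in> B. module.representation (fscale scale) B r b \<noteq> 0}"

definition cs_B :: "('k::field \<Rightarrow> 'v::ab_group_add \<Rightarrow> 'v) \<Rightarrow> ('v \<Rightarrow> 'v) set \<Rightarrow> ('v \<Rightarrow> 'v) \<Rightarrow> nat" where
  "cs_B scale B r = card (supp_B scale B r)"

definition k_bounded :: "('k::field \<Rightarrow> 'v::ab_group_add \<Rightarrow> 'v) \<Rightarrow> nat \<Rightarrow> ('v \<Rightarrow> 'v) set \<Rightarrow> bool" where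
  "k_bounded scale k B \<longleftrightarrow> (\<forall>b\<in>B. \<forall>b'\<in>B. cs_B scale B (b \<circ> b') \<le> k)"

definition bounded_basis :: "('k::field \<Rightarrow> 'v::ab_group_add \<Rightarrow> 'v) \<Rightarrow> ('v \<Rightarrow> 'v) set \<Rightarrow> bool" where
  "bounded_basis scale B \<longleftrightarrow> (\<exists>k\<ge>1. k_bounded scale k B)"

definition multiplicative :: "('v \<Rightarrow> 'v::ab_group_add) set \<Rightarrow> bool" where
  "multiplicative B \<longleftrightarrow> (\<forall>b\<in>B. \<forall>b'\<in>B. b \<circ> b' = 0 \<or> b \<circ> b' \<in> B)"

definition strong_multiplicative :: "('v \<Rightarrow> 'v) set \<Rightarrow> bool" where
  "strong_multiplicative B \<longleftrightarrow> (\<forall>b\<in>B. \<forall>b'\<in>B. b \<circ> b' \<in> B)"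

end

theory Submission imports Defs begin

lemma fsum_apply: "(sum f A) x = (\<Sum>a\<in>A. f a x)"
  by (induct A rule: infinite_finite_induct) auto

lemma fscale_vs:
  assumes "vector_space scale" shows "vector_space (fscale scale)"
proof -
  interpret vector_space scale by fact
  show ?thesis
    by unfold_locales (auto simp: fscale_def fun_eq_iff scale_right_distrib scale_left_distrib)
qed

lemma sum_comp: "(sum f A) \<circ> h = (\<Sum>a\<in>A. f a \<circ> h)"
  by (simp add: fun_eq_iff fsum_apply)

lemma fscale_comp: "fscale s c f \<circ> g = fscale s c (f \<circ> g)"
  by (simp add: fscale_def o_def)

locale endo = V: vector_space scale for scale :: "'k::field \<Rightarrow> 'v::ab_group_add \<Rightarrow> 'v"
begin

sublocale F: vector_space "fscale scale"
  by (rule fscale_vs) (rule V.vector_space_axioms)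

lemma End_iff: "f \<in> End_alg scale \<longleftrightarrow> Vector_Spaces.linear scale scale f"
  by (simp add: End_alg_def)

lemma comp_sum:
  assumes "Vector_Spaces.linear scale scale x"
  shows "x \<circ> sum f A = (\<Sum>a\<in>A. x \<circ> f a)"
proof -
  interpret L: Vector_Spaces.linear scale scale x by fact
  show ?thesis by (simp add: fun_eq_iff fsum_apply L.sum)
qed

lemma comp_fscale:
  assumes "Vector_Spaces.linear scale scale x"
  shows "x \<circ> fscale scale c f = fscale scale c (x \<circ> f)"
proof -
  interpret L: Vector_Spaces.linear scale scale x by fact
  show ?thesis by (simp add: fun_eq_iff fscale_def L.scale)
qed

lemma End_comp: "x \<in> End_alg scale \<Longrightarrow> y \<in> End_alg scale \<Longrightarrow> x \<circ> y \<in> End_alg scale"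
  unfolding End_iff by (rule Vector_Spaces.linear_compose)

context
  fixes B assumes basis: "is_basis_End scale B"
begin

lemma B_indep: "F.independent B" and B_span: "F.span B = End_alg scale" and B_sub: "B \<subseteq> End_alg scale"
  using basis by (auto simp: is_basis_End_def)

abbreviation "R \<equiv> F.representation B"

lemma supp_eq: "supp_B scale B x = {b. R x b \<noteq> 0}"
  using F.representation_ne_zero by (auto simp: supp_B_def)

lemma supp_finite: "finite (supp_B scale B x)"
  unfolding supp_eq by (rule F.finite_representation)

lemma supp_sub: "supp_B scale B x \<subseteq> B"
  by (auto simp: supp_B_def)

lemma expand: "x \<in> End_alg scale \<Longrightarrow> (\<Sum>b\<in>supp_B scale B x. fscale scale (R x b) b) = x"
  unfolding supp_eq by (rule F.sum_nonzero_representation_eq[OF B_indep]) (simp add: B_span)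

lemma in_span_supp: "x \<in> End_alg scale \<Longrightarrow> x \<in> F.span (supp_B scale B x)"
proof -
  assume x: "x \<in> End_alg scale"
  have "(\<Sum>b\<in>supp_B scale B x. fscale scale (R x b) b) \<in> F.span (supp_B scale B x)"
    by (intro F.span_sum F.span_scale) (auto intro: F.span_base)
  then show ?thesis using expand[OF x] by simp
qed

lemma supp_sub_span:
  assumes "z \<in> F.span T" "T \<subseteq> B"
  shows "supp_B scale B z \<subseteq> T"
proof -
  have "R z = F.representation T z"
    by (rule F.representation_extend[OF B_indep assms])
  then show ?thesis
    using F.representation_ne_zero[of T z] by (auto simp: supp_eq)
qed

lemma comp_in_span:
  assumes x: "x \<in> End_alg scale" and y: "y \<in> End_alg scale"
  shows "x \<circ> y \<in> F.span (\<Union>b\<in>supp_B scale B x. \<Union>b'\<in>supp_B scale B y. supp_B scale B (b \<circ> b'))"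
    (is "_ \<in> F.span ?T")
proof -
  have bl: "b \<in> supp_B scale B x \<Longrightarrow> Vector_Spaces.linear scale scale b" for b
    using supp_sub B_sub End_iff by blast
  have "x \<circ> y = (\<Sum>b\<in>supp_B scale B x. fscale scale (R x b) b) \<circ> (\<Sum>b'\<in>supp_B scale B y. fscale scale (R y b') b')"
    using expand[OF x] expand[OF y] by simp
  also have "\<dots> = (\<Sum>b\<in>supp_B scale B x. fscale scale (R x b) (\<Sum>b'\<in>supp_B scale B y. fscale scale (R y b') (b \<circ> b')))"
    by (simp add: sum_comp fscale_comp comp_sum comp_fscale bl cong: sum.cong)
  also have "\<dots> \<in> F.span ?T"
  proof (intro F.span_sum F.span_scale)
    fix b b' assume b: "b \<in> supp_B scale B x" and b': "b' \<in> supp_B scale B y"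
    have "b \<circ> b' \<in> End_alg scale"
      using b b' supp_sub B_sub by (intro End_comp) auto
    then have "b \<circ> b' \<in> F.span (supp_B scale B (b \<circ> b'))" by (rule in_span_supp)
    also have "\<dots> \<subseteq> F.span ?T"
      by (rule F.span_mono) (use b b' in blast)
    finally show "b \<circ> b' \<in> F.span ?T" .
  qed
  finally show ?thesis .
qed

lemma cs_comp_bound:
  assumes kb: "k_bounded scale k B" and x: "x \<in> End_alg scale" and y: "y \<in> End_alg scale"
  shows "cs_B scale B (x \<circ> y) \<le> k * cs_B scale B x * cs_B scale B y"
proof -
  let ?Sx = "supp_B scale B x" and ?Sy = "supp_B scale B y"
  let ?T = "\<Union>b\<in>?Sx. \<Union>b'\<in>?Sy. supp_B scale B (b \<circ> b')"
  have TB: "?T \<subseteq> B" using supp_sub by blast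
  have sub: "supp_B scale B (x \<circ> y) \<subseteq> ?T"
    by (rule supp_sub_span[OF comp_in_span[OF x y] TB])
  have finT: "finite ?T" using supp_finite by blast
  have "card (supp_B scale B (x \<circ> y)) \<le> card ?T" by (rule card_mono[OF finT sub])
  also have "\<dots> \<le> (\<Sum>b\<in>?Sx. card (\<Union>b'\<in>?Sy. supp_B scale B (b \<circ> b')))"
    by (rule card_UN_le[OF supp_finite])
  also have "\<dots> \<le> (\<Sum>b\<in>?Sx. (\<Sum>b'\<in>?Sy. card (supp_B scale B (b \<circ> b'))))"
    by (intro sum_mono card_UN_le[OF supp_finite])
  also have "\<dots> \<le> (\<Sum>b\<in>?Sx. (\<Sum>b'\<in>?Sy. k))"
    using kb supp_sub unfolding k_bounded_def cs_B_def by (intro sum_mono) blast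
  also have "\<dots> = k * card ?Sx * card ?Sy" by simp
  finally show ?thesis by (simp add: cs_B_def)
qed


lemma eval_linear: "Vector_Spaces.linear (fscale scale) scale (\<lambda>f. f v)"
  by (auto simp: Vector_Spaces.linear_iff fscale_def F.vector_space_axioms V.vector_space_axioms)

lemma supp_sum_basis:
  assumes J: "J \<subseteq> B" "finite J"
  shows "supp_B scale B (sum id J) = J" and "sum id J \<in> End_alg scale"
proof -
  have inJ: "\<And>b. b \<in> J \<Longrightarrow> b \<in> F.span B" using J by (auto intro: F.span_base)
  have "R (sum id J) c = (\<Sum>b\<in>J. R b c)" for c
    using F.representation_sum[OF B_indep, of J id] inJ by simp
  also have "\<dots> c = (if c \<in> J then 1 else 0)" for c
    using J by (simp add: F.representation_basis[OF B_indep] subsetD[OF J(1)] cong: sum.cong)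
  finally show "supp_B scale B (sum id J) = J"
    unfolding supp_eq by auto
  show "sum id J \<in> End_alg scale"
    using inJ by (simp add: B_span[symmetric] F.span_sum)
qed

lemma B_infinite:
  assumes inf: "\<not> (\<exists>S. finite S \<and> V.span S = UNIV)" and v0: "(v0::'v) \<noteq> 0"
  shows "infinite B"
proof
  assume finB: "finite B"
  interpret P: vector_space_pair scale scale ..
  interpret FP: vector_space_pair "fscale scale" scale ..
  have "V.span ((\<lambda>f. f v0) ` B) = UNIV"
  proof safe
    fix w :: 'v
    have "V.independent {v0}" using v0 by simp
    from P.linear_independent_extend[OF this, of "\<lambda>_. w"]
    obtain r where r: "Vector_Spaces.linear scale scale r" "r v0 = w" by auto
    have "r \<in> F.span B" using r(1) by (simp add: B_span End_iff)
    then have "r v0 \<in> (\<lambda>f. f v0) ` F.span B" by auto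
    then show "w \<in> V.span ((\<lambda>f. f v0) ` B)"
      using FP.linear_span_image[OF eval_linear[of v0], of B] r(2) by simp
  qed simp
  then show False using inf finB by blast
qed

lemma no_bounded_infinite:
  assumes inf: "\<not> (\<exists>S. finite S \<and> V.span S = UNIV)" and v0: "(v0::'v) \<noteq> 0"
    and kb: "k_bounded scale k B"
  shows False
proof -
  interpret P: vector_space_pair scale scale ..
  have Binf: "infinite B" by (rule B_infinite[OF inf v0])
  obtain Bl where Bl: "V.independent Bl" "UNIV \<subseteq> V.span Bl"
    using V.basis_exists[of UNIV] by metis
  have Blinf: "infinite Bl" using inf Bl by blast
  obtain g where g: "bij_betw g (Bl \<times> (UNIV::nat set)) Bl"
    by (metis Blinf card_of_ordIso card_of_Times_infinite_simps(1) infinite_iff_card_of_nat UNIV_not_empty)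
  have "\<forall>i::nat. \<exists>s. Vector_Spaces.linear scale scale s \<and> (\<forall>x\<in>Bl. s x = g (x, i))"
    using P.linear_independent_extend[OF Bl(1), of "\<lambda>x. g (x, i)" for i] by blast
  then obtain s where s: "\<And>i. Vector_Spaces.linear scale scale (s i)" "\<And>i x. x \<in> Bl \<Longrightarrow> s i x = g (x, i)"
    by metis
  define n where "n i = k * cs_B scale B (s i) * i + 1" for i
  have "\<forall>i. \<exists>J. finite J \<and> card J = n i \<and> J \<subseteq> B"
    using infinite_arbitrarily_large[OF Binf] by blast
  then obtain J where J: "\<And>i. finite (J i)" "\<And>i. card (J i) = n i" "\<And>i. J i \<subseteq> B"
    by metis
  define y where "y i = sum id (J i)" for i
  have ysupp: "supp_B scale B (y i) = J i" and yE: "y i \<in> End_alg scale" for i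
    using supp_sum_basis[OF J(3) J(1)] by (auto simp: y_def)
  define h where "h z = (let p = the_inv_into (Bl \<times> UNIV) g z in y (snd p) (fst p))" for z
  obtain r where r: "Vector_Spaces.linear scale scale r" "\<And>z. z \<in> Bl \<Longrightarrow> r z = h z"
    using P.linear_independent_extend[OF Bl(1), of h] by blast
  have rs: "r \<circ> s i = y i" for i
  proof
    fix v :: 'v
    have lin1: "Vector_Spaces.linear scale scale (r \<circ> s i)"
      by (rule Vector_Spaces.linear_compose[OF s(1) r(1)])
    have lin2: "Vector_Spaces.linear scale scale (y i)" using yE End_iff by blast
    show "(r \<circ> s i) v = y i v"
    proof (rule P.linear_eq_on[OF lin1 lin2])
      show "v \<in> V.span Bl" using Bl(2) by auto
      fix x assume x: "x \<in> Bl"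
      have gx: "g (x, i) \<in> Bl" using g x by (auto simp: bij_betw_def)
      have inv: "the_inv_into (Bl \<times> UNIV) g (g (x, i)) = (x, i)"
        using g x by (intro the_inv_into_f_f) (auto simp: bij_betw_def)
      show "(r \<circ> s i) x = y i x"
        using x gx inv by (simp add: s(2) r(2) h_def)
    qed
  qed
  have rE: "r \<in> End_alg scale" using r(1) End_iff by blast
  have sE: "s i \<in> End_alg scale" for i using s(1) End_iff by blast
  let ?m = "cs_B scale B r"
  have "cs_B scale B (y ?m) \<le> k * ?m * cs_B scale B (s ?m)"
    using cs_comp_bound[OF kb rE sE] rs by metis
  moreover have "cs_B scale B (y ?m) = k * cs_B scale B (s ?m) * ?m + 1"
    using ysupp J(2) by (simp add: cs_B_def n_def)
  ultimately show False by (simp add: mult.commute mult.left_commute)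
qed
end

lemma End_subspace: "F.subspace (End_alg scale)"
proof -
  interpret P: vector_space_pair scale scale ..
  show ?thesis
  proof (rule F.subspaceI)
    show "0 \<in> End_alg scale"
      using P.linear_zero by (simp add: End_iff zero_fun_def)
    show "x + y \<in> End_alg scale" if "x \<in> End_alg scale" "y \<in> End_alg scale" for x y
      using P.linear_compose_add[of x y] that by (simp add: End_iff plus_fun_def)
    show "fscale scale c x \<in> End_alg scale" if "x \<in> End_alg scale" for c x
      using P.linear_compose_scale_right[of x c] that by (simp add: End_iff fscale_def)
  qed
qed

definition mu :: "'v set \<Rightarrow> 'v \<Rightarrow> 'v \<Rightarrow> 'v \<Rightarrow> 'v" where
  "mu Bl i j = (\<lambda>x. scale (V.representation Bl x j) i)"

context
  fixes Bl assumes Bl_ind: "V.independent Bl" and Bl_span: "V.span Bl = UNIV" and Bl_fin: "finite Bl"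
begin

abbreviation "rl \<equiv> V.representation Bl"

lemma rl_basis: "b \<in> Bl \<Longrightarrow> rl b = (\<lambda>v. if v = b then 1 else 0)"
  by (rule V.representation_basis[OF Bl_ind])

lemma rl_add: "rl (x + y) = (\<lambda>b. rl x b + rl y b)"
  by (rule V.representation_add[OF Bl_ind]) (auto simp: Bl_span)

lemma rl_scale: "rl (scale c x) = (\<lambda>b. c * rl x b)"
  by (rule V.representation_scale[OF Bl_ind]) (auto simp: Bl_span)

lemma mu_linear: "Vector_Spaces.linear scale scale (mu Bl i j)"
  by (auto simp: Vector_Spaces.linear_iff mu_def rl_add rl_scale V.vector_space_axioms V.scale_left_distrib)

lemma mu_End: "mu Bl i j \<in> End_alg scale"
  using mu_linear by (simp add: End_iff)

lemma mu_app: "l \<in> Bl \<Longrightarrow> mu Bl i j l = (if l = j then i else 0)"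
  by (auto simp: mu_def rl_basis)

lemma mu_comp: "k \<in> Bl \<Longrightarrow> mu Bl i j \<circ> mu Bl k l = (if j = k then mu Bl i l else 0)"
  by (auto simp: fun_eq_iff mu_def rl_scale rl_basis)

lemma rep_sum: "x = (\<Sum>i\<in>Bl. scale (rl x i) i)"
  by (rule V.sum_representation_eq[OF Bl_ind, symmetric]) (auto simp: Bl_span Bl_fin)

lemma id_sum: "id = (\<Sum>i\<in>Bl. mu Bl i i)"
  by (simp add: fun_eq_iff fsum_apply mu_def rep_sum[symmetric])

lemma Bl_nz: "i \<in> Bl \<Longrightarrow> i \<noteq> 0"
  using V.dependent_zero Bl_ind by blast

lemma mu_inj: "inj_on (\<lambda>(i, j). mu Bl i j) (Bl \<times> Bl)"
proof (rule inj_onI, clarify)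
  fix i j i' j' assume a: "i \<in> Bl" "j \<in> Bl" "i' \<in> Bl" "j' \<in> Bl" and eq: "mu Bl i j = mu Bl i' j'"
  have "mu Bl i j j = mu Bl i' j' j" using eq by simp
  then have "i = (if j = j' then i' else 0)" using a by (simp add: mu_app)
  then show "i = i' \<and> j = j'" using Bl_nz[OF a(1)] by (auto split: if_splits)
qed

definition "MU = (\<lambda>(i, j). mu Bl i j) ` (Bl \<times> Bl)"

lemma MU_fin: "finite MU" unfolding MU_def using Bl_fin by simp

lemma MU_End: "MU \<subseteq> End_alg scale" unfolding MU_def using mu_End by auto

lemma MU_mult: "multiplicative MU"
  unfolding multiplicative_def MU_def by (auto simp: mu_comp)

lemma lin_expand:
  assumes f: "Vector_Spaces.linear scale scale f"
  shows "f = (\<Sum>j\<in>Bl. \<Sum>i\<in>Bl. fscale scale (rl (f j) i) (mu Bl i j))"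
proof
  fix x
  interpret L: Vector_Spaces.linear scale scale f by fact
  have "f x = f (\<Sum>j\<in>Bl. scale (rl x j) j)" using rep_sum[of x] by simp
  also have "\<dots> = (\<Sum>j\<in>Bl. scale (rl x j) (f j))" by (simp add: L.sum L.scale)
  also have "\<dots> = (\<Sum>j\<in>Bl. scale (rl x j) (\<Sum>i\<in>Bl. scale (rl (f j) i) i))"
    using rep_sum by simp
  also have "\<dots> = (\<Sum>j\<in>Bl. \<Sum>i\<in>Bl. scale (rl (f j) i) (scale (rl x j) i))"
    by (simp add: V.scale_sum_right mult.commute)
  also have "\<dots> = (\<Sum>j\<in>Bl. \<Sum>i\<in>Bl. fscale scale (rl (f j) i) (mu Bl i j)) x"
    by (simp add: fsum_apply fscale_def mu_def)
  finally show "f x = (\<Sum>j\<in>Bl. \<Sum>i\<in>Bl. fscale scale (rl (f j) i) (mu Bl i j)) x" .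
qed

lemma MU_span: "F.span MU = End_alg scale"
proof
  show "F.span MU \<subseteq> End_alg scale"
    by (rule F.span_minimal[OF MU_End End_subspace])
  show "End_alg scale \<subseteq> F.span MU"
  proof
    fix f assume "f \<in> End_alg scale"
    then have f: "Vector_Spaces.linear scale scale f" by (simp add: End_iff)
    have "(\<Sum>j\<in>Bl. \<Sum>i\<in>Bl. fscale scale (rl (f j) i) (mu Bl i j)) \<in> F.span MU"
      by (intro F.span_sum F.span_scale) (auto intro!: F.span_base simp: MU_def)
    then show "f \<in> F.span MU" using lin_expand[OF f] by simp
  qed
qed

lemma MU_indep: "F.independent MU"
proof (rule F.independent_if_scalars_zero[OF MU_fin])
  fix c m assume sum0: "(\<Sum>m\<in>MU. fscale scale (c m) m) = 0" and m: "m \<in> MU"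
  have "(\<Sum>p\<in>Bl \<times> Bl. fscale scale (c (mu Bl (fst p) (snd p))) (mu Bl (fst p) (snd p))) = 0"
    using sum0 unfolding MU_def
    by (subst (asm) sum.reindex[OF mu_inj]) (simp add: case_prod_beta)
  then have s2: "(\<Sum>i\<in>Bl. \<Sum>j\<in>Bl. fscale scale (c (mu Bl i j)) (mu Bl i j)) = 0"
    by (simp add: sum.cartesian_product case_prod_beta)
  from m obtain i l where il: "i \<in> Bl" "l \<in> Bl" "m = mu Bl i l" unfolding MU_def by auto
  have "(\<Sum>i\<in>Bl. \<Sum>j\<in>Bl. fscale scale (c (mu Bl i j)) (mu Bl i j)) l = 0"
    using s2 by simp
  then have "(\<Sum>i\<in>Bl. \<Sum>j\<in>Bl. if l = j then scale (c (mu Bl i j)) i else 0) = 0"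
    using il by (simp add: fsum_apply fscale_def mu_app if_distrib[of "scale _"] cong: if_cong)
  then have sl: "(\<Sum>i\<in>Bl. scale (c (mu Bl i l)) i) = 0"
    using il Bl_fin by (simp add: sum.delta)
  have "\<forall>v\<in>Bl. c (mu Bl v l) = 0"
  proof (rule ccontr)
    assume "\<not> (\<forall>v\<in>Bl. c (mu Bl v l) = 0)"
    then have "V.dependent Bl" unfolding V.dependent_finite[OF Bl_fin]
      using sl by (intro exI[of _ "\<lambda>v. c (mu Bl v l)"]) auto
    with Bl_ind show False by simp
  qed
  then show "c m = 0" using il by simp
qed

lemma MU_basis: "is_basis_End scale MU"
  unfolding is_basis_End_def using MU_End MU_indep MU_span by simp


lemma no_strong:
  assumes basis: "is_basis_End scale B" and sm: "strong_multiplicative B" and two: "2 \<le> card Bl"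
  shows False
proof -
  let ?R = "F.representation B"
  note Bi = B_indep[OF basis] and Bs = B_span[OF basis] and Bsub = B_sub[OF basis]
  have finB: "finite B"
    using F.independent_span_bound[OF MU_fin Bi] Bsub MU_span by auto
  define eps where "eps x = (\<Sum>b\<in>B. ?R x b)" for x
  have eps_sum: "eps (\<Sum>a\<in>A. fscale scale (c a) (z a)) = (\<Sum>a\<in>A. c a * eps (z a))"
    if z: "\<And>a. a \<in> A \<Longrightarrow> z a \<in> End_alg scale" for A c z
  proof -
    have zs: "\<And>a. a \<in> A \<Longrightarrow> z a \<in> F.span B" using z Bs by simp
    have "?R (\<Sum>a\<in>A. fscale scale (c a) (z a)) = (\<lambda>b. \<Sum>a\<in>A. ?R (fscale scale (c a) (z a)) b)"
      using zs by (intro F.representation_sum[OF Bi]) (auto intro: F.span_scale)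
    also have "\<dots> = (\<lambda>b. \<Sum>a\<in>A. c a * ?R (z a) b)"
      using zs by (simp add: F.representation_scale[OF Bi])
    finally have "eps (\<Sum>a\<in>A. fscale scale (c a) (z a)) = (\<Sum>b\<in>B. \<Sum>a\<in>A. c a * ?R (z a) b)"
      by (simp add: eps_def)
    also have "\<dots> = (\<Sum>a\<in>A. \<Sum>b\<in>B. c a * ?R (z a) b)" by (rule sum.swap)
    also have "\<dots> = (\<Sum>a\<in>A. c a * eps (z a))" by (simp add: eps_def sum_distrib_left)
    finally show ?thesis .
  qed
  have eps_basis: "eps b = 1" if "b \<in> B" for b
    using that finB by (simp add: eps_def F.representation_basis[OF Bi that])
  have eps_zero: "eps 0 = 0" by (simp add: eps_def F.representation_zero)
  have xexp: "x = (\<Sum>b\<in>B. fscale scale (?R x b) b)" if "x \<in> End_alg scale" for x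
    using that Bs finB by (intro F.sum_representation_eq[OF Bi, symmetric]) auto
  have eps_left: "eps (b \<circ> y) = eps y" if b: "b \<in> B" and y: "y \<in> End_alg scale" for b y
  proof -
    have bl: "Vector_Spaces.linear scale scale b" using b Bsub End_iff by blast
    have "b \<circ> y = (\<Sum>b'\<in>B. fscale scale (?R y b') (b \<circ> b'))"
      by (subst xexp[OF y]) (simp add: comp_sum[OF bl] comp_fscale[OF bl])
    then have "eps (b \<circ> y) = (\<Sum>b'\<in>B. ?R y b' * eps (b \<circ> b'))"
      using b Bsub by (simp add: eps_sum End_comp subsetD)
    also have "\<dots> = (\<Sum>b'\<in>B. ?R y b')"
    proof (rule sum.cong)
      fix b' assume "b' \<in> B"
      then have "b \<circ> b' \<in> B" using sm b by (simp add: strong_multiplicative_def)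
      then show "?R y b' * eps (b \<circ> b') = ?R y b'" by (simp add: eps_basis)
    qed simp
    also have "\<dots> = eps y" by (simp add: eps_def)
    finally show ?thesis .
  qed
  have eps_mult: "eps (x \<circ> y) = eps x * eps y" if x: "x \<in> End_alg scale" and y: "y \<in> End_alg scale" for x y
  proof -
    have "x \<circ> y = (\<Sum>b\<in>B. fscale scale (?R x b) (b \<circ> y))"
      by (subst xexp[OF x]) (simp add: sum_comp fscale_comp)
    then have "eps (x \<circ> y) = (\<Sum>b\<in>B. ?R x b * eps (b \<circ> y))"
      using y Bsub by (simp add: eps_sum End_comp subsetD)
    also have "\<dots> = (\<Sum>b\<in>B. ?R x b * eps y)"
      using y by (intro sum.cong) (simp_all add: eps_left)
    also have "\<dots> = eps x * eps y" by (simp add: eps_def sum_distrib_right)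
    finally show ?thesis .
  qed
  have idE: "id \<in> End_alg scale" using V.linear_id by (simp add: End_iff)
  obtain i0 where i0: "i0 \<in> Bl" using two by fastforce
  have "B \<noteq> {}"
  proof
    assume "B = {}"
    then have "id = (0 :: 'v \<Rightarrow> 'v)" using idE Bs by (metis F.span_empty singletonD)
    then have "i0 = 0" by (simp add: fun_eq_iff)
    then show False using Bl_nz[OF i0] by simp
  qed
  then obtain b0 where b0: "b0 \<in> B" by blast
  have "eps (id \<circ> b0) = eps id * eps b0" using idE b0 Bsub by (intro eps_mult) auto
  then have eps_id: "eps id = 1" using eps_basis[OF b0] by simp
  have eps_mu: "eps (mu Bl i i) = 0" if i: "i \<in> Bl" for i
  proof -
    have "card (Bl - {i}) \<ge> 1" using two i Bl_fin by simp
    then obtain j where j: "j \<in> Bl" "j \<noteq> i" by (metis Diff_iff card_0_eq Bl_fin finite_Diff not_one_le_zero insertI1 ex_in_conv)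
    have "eps (mu Bl i j \<circ> mu Bl i j) = eps (mu Bl i j) * eps (mu Bl i j)"
      by (intro eps_mult mu_End)
    moreover have "mu Bl i j \<circ> mu Bl i j = 0" using i j by (simp add: mu_comp)
    ultimately have z1: "eps (mu Bl i j) = 0" using eps_zero by simp
    have "eps (mu Bl i j \<circ> mu Bl j i) = eps (mu Bl i j) * eps (mu Bl j i)"
      by (intro eps_mult mu_End)
    moreover have "mu Bl i j \<circ> mu Bl j i = mu Bl i i" using i j by (simp add: mu_comp)
    ultimately show ?thesis using z1 by simp
  qed
  have "eps id = eps (\<Sum>i\<in>Bl. fscale scale 1 (mu Bl i i))"
    by (simp add: id_sum)
  also have "\<dots> = (\<Sum>i\<in>Bl. 1 * eps (mu Bl i i))"
    by (rule eps_sum) (rule mu_End)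
  also have "\<dots> = 0" using eps_mu by simp
  finally show False using eps_id by simp
qed

end
end

theorem theorem5p7:
  fixes scale :: "'k::field \<Rightarrow> 'v::ab_group_add \<Rightarrow> 'v"
  assumes vs: "vector_space scale"
    and dim_gt_1: "\<exists>u w. u \<noteq> w \<and> \<not> module.dependent scale {u, w}"
  shows "((\<exists>S. finite S \<and> module.span scale S = UNIV) \<longrightarrow>
            (\<exists>B. is_basis_End scale B \<and> multiplicative B) \<and>
            \<not> (\<exists>B. is_basis_End scale B \<and> strong_multiplicative B))
       \<and> (\<not> (\<exists>S. finite S \<and> module.span scale S = UNIV) \<longrightarrow>
            \<not> (\<exists>B. is_basis_End scale B \<and> bounded_basis scale B))"
proof -
  interpret E: endo scale using vs by (simp add: endo_def)
  from dim_gt_1 obtain u w where uw: "u \<noteq> w" "E.V.independent {u, w}" by blast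
  obtain v0 where v0: "v0 \<noteq> (0::'v)" using uw(1) by (metis (full_types))
  show ?thesis
  proof (intro conjI impI)
    assume "\<exists>S. finite S \<and> module.span scale S = UNIV"
    then obtain S where S: "finite S" "E.V.span S = UNIV" by blast
    obtain Bl where Bl: "E.V.independent Bl" "UNIV \<subseteq> E.V.span Bl"
      using E.V.basis_exists[of UNIV] by metis
    have Blspan: "E.V.span Bl = UNIV" using Bl by auto
    have Blfin: "finite Bl" using E.V.independent_span_bound[OF S(1) Bl(1)] S(2) by auto
    have "card {u, w} \<le> card Bl"
      using E.V.independent_span_bound[OF Blfin uw(2)] Blspan by auto
    then have two: "2 \<le> card Bl" using uw(1) by simp
    show "\<exists>B. is_basis_End scale B \<and> multiplicative B"
      using E.MU_basis[OF Bl(1) Blspan Blfin] E.MU_mult[OF Bl(1) Blspan Blfin] by blast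
    show "\<not> (\<exists>B. is_basis_End scale B \<and> strong_multiplicative B)"
      using E.no_strong[OF Bl(1) Blspan Blfin _ _ two] by blast
  next
    assume inf: "\<not> (\<exists>S. finite S \<and> module.span scale S = UNIV)"
    show "\<not> (\<exists>B. is_basis_End scale B \<and> bounded_basis scale B)"
      using E.no_bounded_infinite[OF _ inf v0] by (auto simp: bounded_basis_def)
  qed
qed

end
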